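(* Consider a finite stochastic partial monitoring game with $N$ actions, $M$ outcomes and $A$ symbols, given by a loss matrix $L=(l_{i,j})\in\mathbb{R}^{N\times M}$, a feedback matrix $H=(h_{i,j})\in[A]^{N\times M}$ and an opponent strategy $p^*\in\mathcal{P}_M$, assumed globally observable and such that action $1$ is the unique optimal action under $p^*$. Let $p^*_i=S_ip^*$ for $i\in[N]$. Then any strongly consistent algorithm satisfies, for all sufficiently large $T$, $$\forall q\in\mathcal{C}_1^c:\quad \sum_{i\in[N]}\mathbb{E}[N_i(T)]\,D(p^*_i\,\Vert\,S_iq)\ \ge\ \log T-\mathrm{o}(\log T).$$
   Context: Game: at each round $t=1,\dots,T$ the learner chooses an action $i(t)\in[N]$ and the opponent's outcome $j(t)\in[M]$ is drawn i.i.d. from $p^*\in\mathcal{P}_M$ (the set of probability distributions on $[M]$); the learner knows $L,H$, suffers the unobserved loss $l_{i(t),j(t)}$ and observes only the symbol $h_{i(t),j(t)}\in[A]$, where $[A]=\{1,\dots,A\}$. $L_i$ denotes the $i$-th row of $L$. Action $1$ is optimal: $1=\arg\min_i L_i^\top p^*$ uniquely. $\Delta_i=(L_i-L_1)^\top p^*$; $N_i(t)$ is the number of rounds before round $t$ in which action $i$ was selected; the regret is $\mathrm{Regret}(T)=\sum_{t=1}^T\Delta_{i(t)}$. Signal matrix: $S_i\in\{0,1\}^{A\times M}$ with $(S_i)_{k,j}=1$ iff $h_{i,j}=k$, so $S_iq$ is the distribution of observed symbols when playing $i$ under outcome distribution $q$. Optimality cell: $\mathcal{C}_i=\{q\in\mathcal{P}_M:\forall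 j\neq i,\ (L_i-L_j)^\top q\le 0\}$, and $\mathcal{C}_i^c=\mathcal{P}_M\setminus\mathcal{C}_i$. $D(p\Vert q)=\sum_k p_k\log(p_k/q_k)$ is the KL divergence of discrete distributions with $0\log(0/0)=0$. Global observability: for all pairs $i,j$, $L_i-L_j\in\bigoplus_{k\in[N]}\mathrm{Im}\,S_k^\top$. An algorithm is strongly consistent if $\mathbb{E}[\mathrm{Regret}(T)]=\mathrm{o}(T^a)$ for every $a>0$ and every opponent strategy $p\in\mathcal{P}_M$ (with $L,H$ fixed). *)

theory Defs
  imports "HOL-Probability.Probability" "HOL-Library.Landau_Symbols"
begin

(* Actions: finite type 'a ([N]); outcomes: finite type 'm ([M]);
   symbols: finite type 's ([A]).  Probability vectors on [M] are 'm pmf. *)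

definition exp_loss :: "('a \<Rightarrow> 'm::finite \<Rightarrow> real) \<Rightarrow> 'a \<Rightarrow> 'm pmf \<Rightarrow> real" where
  "exp_loss L i q = (\<Sum>j\<in>UNIV. L i j * pmf q j)"

(* S_i q : distribution of the observed symbol when playing i under q *)
definition signal_dist :: "('a \<Rightarrow> 'm \<Rightarrow> 's) \<Rightarrow> 'a \<Rightarrow> 'm pmf \<Rightarrow> 's pmf" where
  "signal_dist H i q = map_pmf (H i) q"

definition KL :: "'s::finite pmf \<Rightarrow> 's pmf \<Rightarrow> ereal" where
  "KL p q = (if \<exists>k. pmf p k > 0 \<and> pmf q k = 0 then \<infinity>
             else ereal (\<Sum>k\<in>UNIV. if pmf p k = 0 then 0
                                      else pmf p k * ln (pmf p k / pmf q k)))"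

definition cell :: "('a \<Rightarrow> 'm::finite \<Rightarrow> real) \<Rightarrow> 'a \<Rightarrow> 'm pmf set" where
  "cell L i = {q. \<forall>j. j \<noteq> i \<longrightarrow> exp_loss L i q - exp_loss L j q \<le> 0}"

(* global observability: L_i - L_j \<in> \<Oplus>_k Im S_k^T *)
definition globally_observable ::
  "('a::finite \<Rightarrow> 'm \<Rightarrow> real) \<Rightarrow> ('a \<Rightarrow> 'm \<Rightarrow> 's) \<Rightarrow> bool" where
  "globally_observable L H = (\<forall>i j. \<exists>z :: 'a \<Rightarrow> 's \<Rightarrow> real.
      \<forall>x. L i x - L j x = (\<Sum>k\<in>UNIV. z k (H k x)))"

type_synonym ('a, 's) algorithm = "('a \<times> 's) list \<Rightarrow> 'a pmf"

fun hist :: "('a, 's) algorithm \<Rightarrow> ('a \<Rightarrow> 'm \<Rightarrow> 's) \<Rightarrow> 'm pmf \<Rightarrow> nat \<Rightarrow> ('a \<times> 's) list pmf" where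
  "hist alg H p 0 = return_pmf []"
| "hist alg H p (Suc t) =
     bind_pmf (hist alg H p t) (\<lambda>h. bind_pmf (alg h) (\<lambda>i. map_pmf (\<lambda>j. h @ [(i, H i j)]) p))"

(* E[N_i(T)]: expected number of rounds before round T in which i was selected *)
definition exp_count :: "('a, 's) algorithm \<Rightarrow> ('a \<Rightarrow> 'm \<Rightarrow> 's) \<Rightarrow> 'm pmf \<Rightarrow> 'a \<Rightarrow> nat \<Rightarrow> real" where
  "exp_count alg H p i T = measure_pmf.expectation (hist alg H p (T - 1))
      (\<lambda>h. real (length (filter (\<lambda>x. fst x = i) h)))"

definition exp_regret :: "('a::finite \<Rightarrow> 'm::finite \<Rightarrow> real) \<Rightarrow> ('a, 's) algorithm \<Rightarrow> ('a \<Rightarrow> 'm \<Rightarrow> 's)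
      \<Rightarrow> 'm pmf \<Rightarrow> nat \<Rightarrow> real" where
  "exp_regret L alg H p T = measure_pmf.expectation (hist alg H p T)
      (\<lambda>h. (\<Sum>x\<leftarrow>h. exp_loss L (fst x) p - (MIN k. exp_loss L k p)))"

definition strongly_consistent :: "('a::finite \<Rightarrow> 'm::finite \<Rightarrow> real) \<Rightarrow> ('a \<Rightarrow> 'm \<Rightarrow> 's)
      \<Rightarrow> ('a, 's) algorithm \<Rightarrow> bool" where
  "strongly_consistent L H alg = (\<forall>p :: 'm pmf. \<forall>a::real. a > 0 \<longrightarrow>
      (\<lambda>T. exp_regret L alg H p T) \<in> o(\<lambda>T. real T powr a))"

end

theory Submission
  imports Defs
begin


definition Wt :: "nat \<Rightarrow> ('a \<times> 's) list set" where "Wt t = {h. length h = t}"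

definition fac :: "('a,'s) algorithm \<Rightarrow> ('a\<Rightarrow>'m\<Rightarrow>'s) \<Rightarrow> 'm pmf \<Rightarrow> ('a\<times>'s) list \<Rightarrow> ('a\<times>'s) \<Rightarrow> real" where
  "fac alg H p h x = pmf (alg h) (fst x) * pmf (signal_dist H (fst x) p) (snd x)"

definition wt :: "('a,'s) algorithm \<Rightarrow> ('a\<Rightarrow>'m\<Rightarrow>'s) \<Rightarrow> 'm pmf \<Rightarrow> ('a\<times>'s) list \<Rightarrow> real" where
  "wt alg H p h = (\<Prod>k<length h. fac alg H p (take k h) (h!k))"

lemma finite_Wt: "finite (Wt t :: ('a::finite \<times> 's::finite) list set)"
proof -
  have "Wt t = {xs :: ('a \<times> 's) list. set xs \<subseteq> UNIV \<and> length xs = t}" by (auto simp: Wt_def)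
  then show ?thesis using finite_lists_length_eq[of "UNIV :: ('a\<times>'s) set" t] by simp
qed

lemma wt_Nil[simp]: "wt alg H p [] = 1" by (simp add: wt_def)

lemma wt_snoc: "wt alg H p (h@[x]) = wt alg H p h * fac alg H p h x"
  unfolding wt_def by (simp add: nth_append)

lemma fac_nonneg: "fac alg H p h x \<ge> 0" by (simp add: fac_def)
lemma wt_nonneg: "wt alg H p h \<ge> 0" unfolding wt_def by (intro prod_nonneg) (simp add: fac_nonneg)

lemma exp_finite:
  fixes M :: "'b pmf"
  assumes "finite A" "set_pmf M \<subseteq> A"
  shows "measure_pmf.expectation M F = (\<Sum>a\<in>A. pmf M a * F a)"
  using integral_measure_pmf_real[of A M F] assms by (auto simp: mult.commute)

lemma Wt_Suc: "Wt (Suc t) = (\<lambda>(h,x). h@[x]) ` (Wt t \<times> UNIV)"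
proof
  show "Wt (Suc t) \<subseteq> (\<lambda>(h,x). h@[x]) ` (Wt t \<times> UNIV)"
  proof
    fix y assume "y \<in> Wt (Suc t)"
    then have "length y = Suc t" by (simp add: Wt_def)
    then have "y = butlast y @ [last y]" "butlast y \<in> Wt t"
      by (auto simp: Wt_def intro!: append_butlast_last_id[symmetric])
    then show "y \<in> (\<lambda>(h,x). h@[x]) ` (Wt t \<times> UNIV)"
      by (metis (no_types, lifting) SigmaI UNIV_I case_prod_conv image_eqI)
  qed
qed (auto simp: Wt_def)

lemma sum_Wt_Suc:
  fixes g :: "('a::finite \<times> 's::finite) list \<Rightarrow> 'b::comm_monoid_add"
  shows "(\<Sum>y\<in>Wt (Suc t). g y) = (\<Sum>h\<in>Wt t. \<Sum>x\<in>UNIV. g (h@[x]))"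
proof -
  have inj: "inj_on (\<lambda>(h,x). h@[x]) (Wt t \<times> (UNIV::('a\<times>'s) set))"
    by (auto simp: inj_on_def)
  have "(\<Sum>y\<in>Wt (Suc t). g y) = (\<Sum>z\<in>Wt t \<times> UNIV. g ((\<lambda>(h,x). h@[x]) z))"
    unfolding Wt_Suc by (subst sum.reindex[OF inj]) simp
  also have "\<dots> = (\<Sum>h\<in>Wt t. \<Sum>x\<in>UNIV. g (h@[x]))"
    by (simp add: sum.cartesian_product split_def)
  finally show ?thesis .
qed

lemma set_hist: "set_pmf (hist alg H p t) \<subseteq> Wt t"
  by (induction t) (auto simp: Wt_def)

lemma pmf_map_snoc:
  "pmf (map_pmf (\<lambda>j. h@[(i,H i j)]) p) y =
     (if \<exists>s. y = h@[(i,s)] then pmf (signal_dist H i p) (snd (last y)) else 0)"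
proof -
  have eq: "map_pmf (\<lambda>j. h@[(i,H i j)]) p = map_pmf (\<lambda>s. h@[(i,s)]) (signal_dist H i p)"
    by (simp add: signal_dist_def map_pmf_comp)
  have inj: "inj (\<lambda>s. h@[(i,s)])" by (auto simp: inj_def)
  show ?thesis
  proof (cases "\<exists>s. y = h@[(i,s)]")
    case True
    then obtain s where y: "y = h@[(i,s)]" by blast
    show ?thesis unfolding eq y using pmf_map_inj'[OF inj] by simp
  next
    case False
    then have "y \<notin> set_pmf (map_pmf (\<lambda>s. h@[(i,s)]) (signal_dist H i p))" by auto
    then show ?thesis using False eq by (simp add: set_pmf_eq)
  qed
qed

lemma pmf_hist:
  fixes alg :: "('a::finite,'s::finite) algorithm"
  shows "pmf (hist alg H p t) y = (if y \<in> Wt t then wt alg H p y else 0)"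
proof (induction t arbitrary: y)
  case 0
  then show ?case by (auto simp: Wt_def)
next
  case (Suc t)
  let ?T = "\<lambda>h i. pmf (map_pmf (\<lambda>j. h@[(i,H i j)]) p) y"
  have "pmf (hist alg H p (Suc t)) y =
      (\<Sum>h\<in>Wt t. wt alg H p h * (\<Sum>i\<in>UNIV. pmf (alg h) i * ?T h i))"
    apply (simp add: pmf_bind)
    apply (subst exp_finite[OF finite_Wt set_hist])
    apply (intro sum.cong refl)
    apply (subst Suc)
    apply (subst exp_finite[of UNIV])
    by auto
  also have "\<dots> = (if y \<in> Wt (Suc t) then wt alg H p y else 0)"
  proof (cases "y \<in> Wt (Suc t)")
    case True
    then obtain h0 x0 where y: "y = h0@[x0]" and h0: "h0 \<in> Wt t" unfolding Wt_Suc by auto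
    obtain i0 s0 where x0: "x0 = (i0,s0)" by fastforce
    have T: "?T h i = (if h = h0 \<and> i = i0 then pmf (signal_dist H i0 p) s0 else 0)" for h i
      unfolding pmf_map_snoc y x0 by auto
    have "(\<Sum>h\<in>Wt t. wt alg H p h * (\<Sum>i\<in>UNIV. pmf (alg h) i * ?T h i))
        = (\<Sum>h\<in>Wt t. if h = h0 then wt alg H p h0 * (pmf (alg h0) i0 * pmf (signal_dist H i0 p) s0) else 0)"
      unfolding T by (intro sum.cong refl) (auto simp: if_distrib cong: if_cong)
    also have "\<dots> = wt alg H p y"
      using h0 by (subst sum.delta[OF finite_Wt]) (simp add: y x0 wt_snoc fac_def)
    finally show ?thesis using True by simp
  next
    case False
    have "?T h i = 0" if "h \<in> Wt t" for h i
      using False that unfolding pmf_map_snoc by (auto simp: Wt_def)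
    then show ?thesis using False by simp
  qed
  finally show ?case .
qed

lemma exp_hist:
  fixes alg :: "('a::finite,'s::finite) algorithm"
  shows "measure_pmf.expectation (hist alg H p t) F = (\<Sum>h\<in>Wt t. wt alg H p h * F h)"
  by (subst exp_finite[OF finite_Wt set_hist]) (auto simp: pmf_hist intro!: sum.cong)

lemma sum_pair: "(\<Sum>x\<in>UNIV. g x) = (\<Sum>i\<in>(UNIV::'a::finite set). \<Sum>s\<in>(UNIV::'b::finite set). g (i,s))"
  by (simp add: sum.cartesian_product UNIV_Times_UNIV[symmetric] del: UNIV_Times_UNIV)

lemma sum_pmf_UNIV: "(\<Sum>x\<in>(UNIV::'a::finite set). pmf M x) = 1"
  by (rule sum_pmf_eq_1) auto

lemma sum_signal: "(\<Sum>s\<in>UNIV. pmf (signal_dist H i p) s * G s) = (\<Sum>j\<in>(UNIV::'m::finite set). pmf p j * G (H i j :: 's::finite))"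
proof -
  have "(\<Sum>s\<in>UNIV. pmf (signal_dist H i p) s * G s) = measure_pmf.expectation (signal_dist H i p) G"
    by (subst exp_finite[of UNIV]) auto
  also have "\<dots> = measure_pmf.expectation p (\<lambda>j. G (H i j))"
    by (simp add: signal_dist_def)
  also have "\<dots> = (\<Sum>j\<in>UNIV. pmf p j * G (H i j))"
    by (subst exp_finite[of UNIV]) auto
  finally show ?thesis .
qed

lemma sum_fac_fst:
  fixes alg :: "('a::finite,'s::finite) algorithm"
  shows "(\<Sum>x\<in>UNIV. fac alg H p h x * g (fst x)) = (\<Sum>i\<in>UNIV. pmf (alg h) i * g i)"
proof -
  have "(\<Sum>x\<in>UNIV. fac alg H p h x * g (fst x)) = (\<Sum>i\<in>UNIV. \<Sum>s\<in>UNIV. pmf (alg h) i * g i * pmf (signal_dist H i p) s)"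
    by (subst sum_pair) (auto simp: fac_def intro!: sum.cong)
  also have "\<dots> = (\<Sum>i\<in>UNIV. pmf (alg h) i * g i * (\<Sum>s\<in>UNIV. pmf (signal_dist H i p) s))"
    by (simp add: sum_distrib_left)
  finally show ?thesis by (simp add: sum_pmf_UNIV)
qed

lemma sum_fac:
  fixes alg :: "('a::finite,'s::finite) algorithm"
  shows "(\<Sum>x\<in>UNIV. fac alg H p h x) = 1"
  using sum_fac_fst[of alg H p h "\<lambda>_. 1"] by (simp add: sum_pmf_UNIV)

lemma sum_wt:
  fixes alg :: "('a::finite,'s::finite) algorithm"
  shows "(\<Sum>h\<in>Wt t. wt alg H p h) = 1"
proof -
  have "(\<Sum>h\<in>Wt t. pmf (hist alg H p t) h) = 1"
    by (rule sum_pmf_eq_1[OF finite_Wt set_hist])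
  then show ?thesis by (simp add: pmf_hist)
qed

lemma exp_additive:
  fixes alg :: "('a::finite,'s::finite) algorithm"
  shows "(\<Sum>h\<in>Wt t. wt alg H p h * sum_list (map g h)) =
     (\<Sum>k<t. \<Sum>h\<in>Wt k. wt alg H p h * (\<Sum>x\<in>UNIV. fac alg H p h x * g x))"
proof (induction t)
  case 0
  then show ?case by (simp add: Wt_def)
next
  case (Suc t)
  have "(\<Sum>h\<in>Wt (Suc t). wt alg H p h * sum_list (map g h)) =
      (\<Sum>h\<in>Wt t. \<Sum>x\<in>UNIV. wt alg H p h * fac alg H p h x * (sum_list (map g h) + g x))"
    by (simp add: sum_Wt_Suc wt_snoc)
  also have "\<dots> = (\<Sum>h\<in>Wt t. wt alg H p h * sum_list (map g h) * (\<Sum>x\<in>UNIV. fac alg H p h x)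
        + wt alg H p h * (\<Sum>x\<in>UNIV. fac alg H p h x * g x))"
    by (intro sum.cong refl) (simp add: sum_distrib_left sum.distrib algebra_simps)
  also have "\<dots> = (\<Sum>h\<in>Wt t. wt alg H p h * sum_list (map g h)) +
        (\<Sum>h\<in>Wt t. wt alg H p h * (\<Sum>x\<in>UNIV. fac alg H p h x * g x))"
    by (simp add: sum_fac sum.distrib)
  finally show ?case using Suc by simp
qed

definition cnt :: "('a,'s) algorithm \<Rightarrow> ('a\<Rightarrow>'m\<Rightarrow>'s) \<Rightarrow> 'm pmf \<Rightarrow> 'a \<Rightarrow> nat \<Rightarrow> real" where
  "cnt alg H p i t = (\<Sum>k<t. \<Sum>h\<in>Wt k. wt alg H p h * pmf (alg h) i)"

lemma cnt_swap:
  fixes alg :: "('a::finite,'s::finite) algorithm"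
  shows "(\<Sum>k<t. \<Sum>h\<in>Wt k. wt alg H p h * (\<Sum>i\<in>UNIV. pmf (alg h) i * g i)) = (\<Sum>i\<in>UNIV. g i * cnt alg H p i t)"
  unfolding cnt_def
  by (simp add: sum_distrib_left sum_distrib_right sum.swap[of _ "UNIV::'a set"] algebra_simps)

lemma count_list: "real (length (filter (\<lambda>x. fst x = i) h)) = sum_list (map (\<lambda>x. if fst x = i then 1 else 0) h)"
  by (induction h) auto

lemma exp_count_cnt:
  fixes alg :: "('a::finite,'s::finite) algorithm"
  shows "exp_count alg H p i T = cnt alg H p i (T - 1)"
proof -
  have "exp_count alg H p i T = (\<Sum>h\<in>Wt (T-1). wt alg H p h * sum_list (map (\<lambda>x. if fst x = i then 1 else 0) h))"
    unfolding exp_count_def exp_hist count_list ..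
  also have "\<dots> = (\<Sum>k<T-1. \<Sum>h\<in>Wt k. wt alg H p h * (\<Sum>j\<in>UNIV. pmf (alg h) j * (if j = i then 1 else 0)))"
    unfolding exp_additive sum_fac_fst[of alg H p _ "\<lambda>j. if j = i then 1 else 0"] ..
  also have "\<dots> = cnt alg H p i (T - 1)"
    unfolding cnt_def by (simp add: if_distrib cong: if_cong)
  finally show ?thesis .
qed

lemma sum_cnt:
  fixes alg :: "('a::finite,'s::finite) algorithm"
  shows "(\<Sum>i\<in>UNIV. cnt alg H p i t) = real t"
  using cnt_swap[where t=t and alg=alg and H=H and p=p and g="\<lambda>_. 1"] by (simp add: sum_pmf_UNIV sum_wt)

lemma cnt_nonneg: "cnt alg H p i t \<ge> 0"
  unfolding cnt_def by (intro sum_nonneg mult_nonneg_nonneg wt_nonneg) auto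

lemma exp_regret_cnt:
  fixes alg :: "('a::finite,'s::finite) algorithm" and L :: "'a \<Rightarrow> 'm::finite \<Rightarrow> real"
  shows "exp_regret L alg H p t = (\<Sum>i\<in>UNIV. (exp_loss L i p - (MIN k. exp_loss L k p)) * cnt alg H p i t)"
  unfolding exp_regret_def exp_hist
  using exp_additive[where alg=alg and H=H and p=p and t=t and g="\<lambda>x. exp_loss L (fst x) p - (MIN k. exp_loss L k p)"]
  using sum_fac_fst[where alg=alg and H=H and p=p and g="\<lambda>i. exp_loss L i p - (MIN k. exp_loss L k p)"]
  by (simp add: cnt_swap)



lemma logsum_term:
  fixes a b A B :: real
  assumes "a \<ge> 0" "b \<ge> 0" "a > 0 \<Longrightarrow> b > 0" "A > 0" "B > 0"
  shows "a * ln (a / b) \<ge> a * (ln A - ln B) + a - b * A / B"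
proof (cases "a > 0")
  case False
  then have "a = 0" using assms by simp
  then show ?thesis using assms by simp
next
  case True
  then have b: "b > 0" using assms by simp
  define r where "r = b * A / (a * B)"
  have r: "r > 0" unfolding r_def using True b assms by simp
  have "ln r \<le> r - 1" using ln_le_minus_one r by simp
  moreover have "ln r = ln b + ln A - ln a - ln B"
    unfolding r_def using True b assms by (simp add: ln_div ln_mult)
  ultimately have "ln b + ln A - ln a - ln B \<le> r - 1" by simp
  then have "a * (ln b + ln A - ln a - ln B) \<le> a * (r - 1)"
    using True by (simp add: mult_left_mono)
  moreover have "a * (r - 1) = b * A / B - a" unfolding r_def using True by (simp add: field_simps)
  moreover have "a * ln (a / b) = a * ln a - a * ln b" using True b by (simp add: ln_div algebra_simps)
  ultimately show ?thesis by (simp add: algebra_simps)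
qed

lemma logsum:
  fixes a b :: "'x \<Rightarrow> real"
  assumes "finite S" "\<And>h. h \<in> S \<Longrightarrow> a h \<ge> 0" "\<And>h. h \<in> S \<Longrightarrow> b h \<ge> 0"
    "\<And>h. h \<in> S \<Longrightarrow> a h > 0 \<Longrightarrow> b h > 0"
  shows "(\<Sum>h\<in>S. a h * ln (a h / b h)) \<ge> sum a S * ln (sum a S) - sum a S * ln (sum b S)"
    and "sum a S > 0 \<Longrightarrow> sum b S > 0"
proof -
  show B: "sum b S > 0" if "sum a S > 0"
  proof -
    obtain h where h: "h \<in> S" "a h > 0" using \<open>sum a S > 0\<close> assms(2)
      by (metis less_eq_real_def sum_nonneg not_less sum_nonpos)
    then have "b h > 0" using assms by simp
    moreover have "b h \<le> sum b S" using assms h by (intro member_le_sum) auto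
    ultimately show ?thesis by simp
  qed
  show "(\<Sum>h\<in>S. a h * ln (a h / b h)) \<ge> sum a S * ln (sum a S) - sum a S * ln (sum b S)"
  proof (cases "sum a S > 0")
    case False
    then have "sum a S = 0" using assms sum_nonneg[of S a] by simp
    then have "\<forall>h\<in>S. a h = 0" using assms sum_nonneg_eq_0_iff by blast
    then show ?thesis using \<open>sum a S = 0\<close> by simp
  next
    case True
    let ?A = "sum a S" and ?B = "sum b S"
    have Bp: "?B > 0" using B True by simp
    have "(\<Sum>h\<in>S. a h * ln (a h / b h)) \<ge> (\<Sum>h\<in>S. a h * (ln ?A - ln ?B) + a h - b h * ?A / ?B)"
      using assms True Bp by (intro sum_mono logsum_term) auto
    also have "(\<Sum>h\<in>S. a h * (ln ?A - ln ?B) + a h - b h * ?A / ?B) = ?A * (ln ?A - ln ?B) + ?A - ?B * ?A / ?B"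
      by (simp add: sum.distrib sum_subtractf sum_distrib_right sum_divide_distrib[symmetric])
    also have "\<dots> = ?A * ln ?A - ?A * ln ?B" using Bp by (simp add: algebra_simps)
    finally show ?thesis .
  qed
qed



definition ell :: "('a\<Rightarrow>'m\<Rightarrow>'s) \<Rightarrow> 'm pmf \<Rightarrow> 'm pmf \<Rightarrow> ('a\<times>'s) \<Rightarrow> real" where
  "ell H p q x = ln (pmf (signal_dist H (fst x) p) (snd x) / pmf (signal_dist H (fst x) q) (snd x))"

definition klr :: "('a\<Rightarrow>'m\<Rightarrow>'s::finite) \<Rightarrow> 'm pmf \<Rightarrow> 'm pmf \<Rightarrow> 'a \<Rightarrow> real" where
  "klr H p q i = (\<Sum>k\<in>UNIV. if pmf (signal_dist H i p) k = 0 then 0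
       else pmf (signal_dist H i p) k * ln (pmf (signal_dist H i p) k / pmf (signal_dist H i q) k))"

lemma chain:
  fixes alg :: "('a::finite,'s::finite) algorithm"
  shows "(\<Sum>h\<in>Wt t. wt alg H p h * sum_list (map (ell H p q) h)) = (\<Sum>i\<in>UNIV. klr H p q i * cnt alg H p i t)"
proof -
  have f: "(\<Sum>x\<in>UNIV. fac alg H p h x * ell H p q x) = (\<Sum>i\<in>UNIV. pmf (alg h) i * klr H p q i)" for h
  proof -
    have "(\<Sum>x\<in>UNIV. fac alg H p h x * ell H p q x) =
       (\<Sum>i\<in>UNIV. \<Sum>s\<in>UNIV. pmf (alg h) i * (pmf (signal_dist H i p) s * ell H p q (i,s)))"
      by (subst sum_pair) (simp add: fac_def algebra_simps)
    also have "\<dots> = (\<Sum>i\<in>UNIV. pmf (alg h) i * klr H p q i)"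
      unfolding klr_def sum_distrib_left[symmetric]
      by (intro sum.cong refl arg_cong2[where f="(*)"]) (auto simp: ell_def)
    finally show ?thesis .
  qed
  show ?thesis unfolding exp_additive f cnt_swap ..
qed

lemma fac_pos:
  assumes "fac alg H p h x > 0"
  shows "pmf (alg h) (fst x) > 0" "pmf (signal_dist H (fst x) p) (snd x) > 0"
  using assms unfolding fac_def
  by (metis pmf_nonneg less_eq_real_def mult_eq_0_iff zero_less_mult_iff)+

lemma abscont:
  assumes "wt alg H p h > 0"
    "\<forall>x\<in>set h. \<forall>k. pmf (signal_dist H (fst x) p) k > 0 \<longrightarrow> pmf (signal_dist H (fst x) q) k > 0"
  shows "wt alg H q h > 0 \<and> ln (wt alg H p h / wt alg H q h) = sum_list (map (ell H p q) h)"
  using assms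
proof (induction h rule: rev_induct)
  case Nil
  then show ?case by simp
next
  case (snoc x h)
  have wp: "wt alg H p h > 0" and fp: "fac alg H p h x > 0"
    using snoc.prems(1) wt_nonneg[of alg H p h] fac_nonneg[of alg H p h x]
    by (auto simp: wt_snoc zero_less_mult_iff)
  have IH: "wt alg H q h > 0" "ln (wt alg H p h / wt alg H q h) = sum_list (map (ell H p q) h)"
    using snoc.IH[OF wp] snoc.prems(2) by auto
  have a: "pmf (alg h) (fst x) > 0" and ps: "pmf (signal_dist H (fst x) p) (snd x) > 0"
    using fac_pos[OF fp] by auto
  have qs: "pmf (signal_dist H (fst x) q) (snd x) > 0" using snoc.prems(2) ps by auto
  have fq: "fac alg H q h x > 0" using a qs by (simp add: fac_def)
  have e1: "ln (wt alg H p (h@[x]) / wt alg H q (h@[x])) =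
      ln (wt alg H p h / wt alg H q h) + ln (fac alg H p h x / fac alg H q h x)"
    using wp fp fq IH(1) by (simp add: wt_snoc ln_div ln_mult)
  have e2: "fac alg H p h x / fac alg H q h x = pmf (signal_dist H (fst x) p) (snd x) / pmf (signal_dist H (fst x) q) (snd x)"
    using a by (simp add: fac_def)
  have "ln (wt alg H p (h@[x]) / wt alg H q (h@[x])) = sum_list (map (ell H p q) h) + ell H p q x"
    unfolding e1 e2 IH(2) by (simp add: ell_def)
  then have "ln (wt alg H p (h@[x]) / wt alg H q (h@[x])) = sum_list (map (ell H p q) (h@[x]))"
    by simp
  then show ?case using IH fq by (simp add: wt_snoc)
qed

lemma cnt_sum:
  fixes alg :: "('a::finite,'s::finite) algorithm"
  shows "cnt alg H p i t = (\<Sum>h\<in>Wt t. wt alg H p h * real (length (filter (\<lambda>x. fst x = i) h)))"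
  using exp_count_cnt[of alg H p i "Suc t"] unfolding exp_count_def exp_hist by simp

lemma wt_pos_cnt:
  fixes alg :: "('a::finite,'s::finite) algorithm"
  assumes "h \<in> Wt t" "wt alg H p h > 0" "x \<in> set h"
  shows "cnt alg H p (fst x) t > 0"
proof -
  have "length (filter (\<lambda>y. fst y = fst x) h) > 0" using assms(3)
    by (metis (mono_tags) filter_empty_conv length_greater_0_conv)
  then have "wt alg H p h * real (length (filter (\<lambda>y. fst y = fst x) h)) > 0" using assms by simp
  also have "\<dots> \<le> cnt alg H p (fst x) t" unfolding cnt_sum
    using assms(1) by (intro member_le_sum[OF _ _ finite_Wt]) (auto intro!: mult_nonneg_nonneg wt_nonneg)
  finally show ?thesis .
qed



lemma xlnx: "(x::real) \<ge> 0 \<Longrightarrow> x * ln x \<ge> -1"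
proof (cases "x = 0")
  case False
  assume "x \<ge> 0"
  then have x: "x > 0" using False by simp
  have "ln (1/x) \<le> 1/x - 1" using ln_le_minus_one[of "1/x"] x by simp
  then have "- ln x \<le> 1/x - 1" using x by (simp add: ln_div)
  then have "x * (- ln x) \<le> x * (1/x - 1)" using x by (intro mult_left_mono) auto
  then show ?thesis using x by (simp add: algebra_simps)
qed simp

lemma ln_le0: "(y::real) \<ge> 0 \<Longrightarrow> y \<le> 1 \<Longrightarrow> ln y \<le> 0"
  by (cases "y = 0") auto

lemma main_bound:
  fixes alg :: "('a::finite,'s::finite) algorithm" and H :: "'a \<Rightarrow> 'm \<Rightarrow> 's" and E :: "('a \<times> 's) list set"
  assumes E: "E \<subseteq> Wt t"
    and fin: "\<forall>i. cnt alg H p i t > 0 \<longrightarrow> (\<forall>k. pmf (signal_dist H i p) k > 0 \<longrightarrow> pmf (signal_dist H i q) k > 0)"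
  shows "(\<Sum>i\<in>UNIV. klr H p q i * cnt alg H p i t) \<ge> -2 - (\<Sum>h\<in>E. wt alg H p h) * ln (\<Sum>h\<in>E. wt alg H q h)"
    and "(\<Sum>h\<in>E. wt alg H p h) > 0 \<Longrightarrow> (\<Sum>h\<in>E. wt alg H q h) > 0"
proof -
  let ?W = "Wt t :: ('a \<times> 's) list set"
  let ?wp = "wt alg H p" and ?wq = "wt alg H q"
  have ac: "?wq h > 0 \<and> ln (?wp h / ?wq h) = sum_list (map (ell H p q) h)"
    if "h \<in> ?W" "?wp h > 0" for h
  proof (rule abscont[OF that(2)], intro ballI allI impI)
    fix x k assume "x \<in> set h" "pmf (signal_dist H (fst x) p) k > 0"
    then show "pmf (signal_dist H (fst x) q) k > 0"
      using fin wt_pos_cnt[OF that] by blast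
  qed
  have pos: "h \<in> ?W \<Longrightarrow> ?wp h > 0 \<Longrightarrow> ?wq h > 0" for h using ac by blast
  have fW: "finite ?W" by (rule finite_Wt)
  have "(\<Sum>i\<in>UNIV. klr H p q i * cnt alg H p i t) = (\<Sum>h\<in>?W. ?wp h * sum_list (map (ell H p q) h))"
    by (rule chain[symmetric])
  also have "\<dots> = (\<Sum>h\<in>?W. ?wp h * ln (?wp h / ?wq h))"
  proof (intro sum.cong refl)
    fix h assume h: "h \<in> ?W"
    show "?wp h * sum_list (map (ell H p q) h) = ?wp h * ln (?wp h / ?wq h)"
    proof (cases "?wp h > 0")
      case True then show ?thesis using ac[OF h] by simp
    next
      case False then have "?wp h = 0" using wt_nonneg[of alg H p h] by simp
      then show ?thesis by simp
    qed
  qed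
  also have "\<dots> = (\<Sum>h\<in>?W - E. ?wp h * ln (?wp h / ?wq h)) + (\<Sum>h\<in>E. ?wp h * ln (?wp h / ?wq h))"
    by (rule sum.subset_diff[OF E fW])
  finally have D: "(\<Sum>i\<in>UNIV. klr H p q i * cnt alg H p i t) =
     (\<Sum>h\<in>?W - E. ?wp h * ln (?wp h / ?wq h)) + (\<Sum>h\<in>E. ?wp h * ln (?wp h / ?wq h))" .
  have fE: "finite E" using E fW finite_subset by blast
  have L1: "(\<Sum>h\<in>E. ?wp h * ln (?wp h / ?wq h)) \<ge> sum ?wp E * ln (sum ?wp E) - sum ?wp E * ln (sum ?wq E)"
    and L1b: "sum ?wp E > 0 \<Longrightarrow> sum ?wq E > 0"
    using logsum[OF fE, of ?wp ?wq] pos E by (auto simp: wt_nonneg)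
  have L2: "(\<Sum>h\<in>?W - E. ?wp h * ln (?wp h / ?wq h)) \<ge> sum ?wp (?W - E) * ln (sum ?wp (?W - E)) - sum ?wp (?W - E) * ln (sum ?wq (?W - E))"
    using logsum[of "?W - E" ?wp ?wq] pos fW by (auto simp: wt_nonneg)
  show "sum ?wp E > 0 \<Longrightarrow> sum ?wq E > 0" by (rule L1b)
  have sp: "sum ?wp (?W - E) + sum ?wp E = 1" and sq: "sum ?wq (?W - E) + sum ?wq E = 1"
    using sum.subset_diff[OF E fW, of ?wp] sum.subset_diff[OF E fW, of ?wq] sum_wt[of alg H p t] sum_wt[of alg H q t]
    by auto
  have nn: "sum ?wp E \<ge> 0" "sum ?wq E \<ge> 0" "sum ?wp (?W - E) \<ge> 0" "sum ?wq (?W - E) \<ge> 0"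
    by (auto intro!: sum_nonneg wt_nonneg)
  have x1: "sum ?wp E * ln (sum ?wp E) \<ge> -1" "sum ?wp (?W - E) * ln (sum ?wp (?W - E)) \<ge> -1"
    using nn by (auto intro!: xlnx)
  have "ln (sum ?wq (?W - E)) \<le> 0" using nn sq by (intro ln_le0) auto
  then have x2: "sum ?wp (?W - E) * ln (sum ?wq (?W - E)) \<le> 0"
    using nn by (simp add: mult_nonneg_nonpos)
  show "(\<Sum>i\<in>UNIV. klr H p q i * cnt alg H p i t) \<ge> -2 - sum ?wp E * ln (sum ?wq E)"
    unfolding D using L1 L2 x1 x2 by linarith
qed



lemma MIN_le: "(MIN k. (f::'a::finite \<Rightarrow> real) k) \<le> f i"
  by (simp add: Min_le)

lemma reg_lower_p:
  fixes alg :: "('a::finite,'s::finite) algorithm" and L :: "'a \<Rightarrow> 'm::finite \<Rightarrow> real"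
  assumes gap: "\<forall>i. i \<noteq> a1 \<longrightarrow> exp_loss L i p - exp_loss L a1 p \<ge> \<delta>" and d: "\<delta> > 0"
    and mn: "(MIN k. exp_loss L k p) = exp_loss L a1 p"
  shows "exp_regret L alg H p t \<ge> \<delta> * (real t - cnt alg H p a1 t)"
proof -
  have "\<delta> * (real t - cnt alg H p a1 t) = (\<Sum>i\<in>UNIV. (if i = a1 then 0 else \<delta>) * cnt alg H p i t)"
  proof -
    have "(\<Sum>i\<in>UNIV. (if i = a1 then 0 else \<delta>) * cnt alg H p i t)
        = (\<Sum>i\<in>UNIV. \<delta> * cnt alg H p i t - (if i = a1 then \<delta> * cnt alg H p i t else 0))"
      by (intro sum.cong refl) auto
    also have "\<dots> = \<delta> * (\<Sum>i\<in>UNIV. cnt alg H p i t) - \<delta> * cnt alg H p a1 t"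
      by (simp add: sum_subtractf sum_distrib_left)
    finally show ?thesis by (simp add: sum_cnt algebra_simps)
  qed
  also have "\<dots> \<le> (\<Sum>i\<in>UNIV. (exp_loss L i p - (MIN k. exp_loss L k p)) * cnt alg H p i t)"
    using gap mn by (intro sum_mono mult_right_mono cnt_nonneg) auto
  finally show ?thesis by (simp add: exp_regret_cnt)
qed

lemma reg_lower_q:
  fixes alg :: "('a::finite,'s::finite) algorithm" and L :: "'a \<Rightarrow> 'm::finite \<Rightarrow> real"
  shows "exp_regret L alg H q t \<ge> (exp_loss L a1 q - (MIN k. exp_loss L k q)) * cnt alg H q a1 t"
  unfolding exp_regret_cnt
  by (rule member_le_sum) (auto intro!: mult_nonneg_nonneg cnt_nonneg simp: MIN_le)



lemma term_not_minf: "c \<ge> 0 \<Longrightarrow> ereal c * KL P Q \<noteq> -\<infinity>"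
  unfolding KL_def by (cases "c = 0") auto

lemma step_bound:
  fixes alg :: "('a::finite,'s::finite) algorithm" and H :: "'a \<Rightarrow> 'm \<Rightarrow> 's"
  assumes a: "0 < a" "a < 1" and t: "t \<ge> 1"
    and cp: "real t - cnt alg H p a1 t \<le> (a/2) * real t powr a"
    and cq: "cnt alg H q a1 t \<le> (1/2) * real t powr a"
  shows "(\<Sum>i\<in>UNIV. ereal (cnt alg H p i t) * KL (signal_dist H i p) (signal_dist H i q))
           \<ge> ereal ((1-a)^2 * ln (real t) - 2)"
proof (cases "\<exists>i. cnt alg H p i t > 0 \<and> (\<exists>k. pmf (signal_dist H i p) k > 0 \<and> pmf (signal_dist H i q) k = 0)")
  case True
  then obtain i where "cnt alg H p i t > 0" "KL (signal_dist H i p) (signal_dist H i q) = \<infinity>"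
    unfolding KL_def by (metis (no_types, lifting))
  then have "ereal (cnt alg H p i t) * KL (signal_dist H i p) (signal_dist H i q) = \<infinity>" by simp
  then have "(\<Sum>i\<in>UNIV. ereal (cnt alg H p i t) * KL (signal_dist H i p) (signal_dist H i q)) = \<infinity>"
    by (subst sum_Pinfty) auto
  then show ?thesis by simp
next
  case False
  let ?W = "Wt t :: ('a \<times> 's) list set"
  let ?N = "\<lambda>h::('a \<times> 's) list. real (length (filter (\<lambda>x. fst x = a1) h))"
  define E where "E = {h \<in> ?W. real t \<le> 2 * ?N h}"
  have E: "E \<subseteq> ?W" unfolding E_def by auto
  have fW: "finite ?W" by (rule finite_Wt)
  have tp: "real t > 0" using t by simp
  have Nle: "?N h \<le> real t" if "h \<in> ?W" for h
    using that length_filter_le[of "\<lambda>x. fst x = a1" h] by (simp add: Wt_def)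
  have fin: "\<forall>i. cnt alg H p i t > 0 \<longrightarrow> (\<forall>k. pmf (signal_dist H i p) k > 0 \<longrightarrow> pmf (signal_dist H i q) k > 0)"
    using False by (metis less_eq_real_def pmf_nonneg)
  note mb = main_bound[OF E fin]
  let ?PE = "\<Sum>h\<in>E. wt alg H p h" and ?QE = "\<Sum>h\<in>E. wt alg H q h"
  have "?QE \<le> (\<Sum>h\<in>E. wt alg H q h * (2 * ?N h / real t))"
  proof (intro sum_mono)
    fix h assume "h \<in> E"
    then have "1 \<le> 2 * ?N h / real t" unfolding E_def using tp by (simp add: field_simps)
    then show "wt alg H q h \<le> wt alg H q h * (2 * ?N h / real t)"
      using wt_nonneg[of alg H q h] by (metis mult.right_neutral mult_left_mono)
  qed
  also have "\<dots> \<le> (\<Sum>h\<in>?W. wt alg H q h * (2 * ?N h / real t))"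
    using E fW by (intro sum_mono2) (auto intro!: divide_nonneg_nonneg mult_nonneg_nonneg wt_nonneg)
  also have "\<dots> = 2 / real t * cnt alg H q a1 t"
    unfolding cnt_sum by (simp add: sum_distrib_left algebra_simps)
  also have "\<dots> \<le> real t powr a / real t"
  proof -
    have "2 * cnt alg H q a1 t \<le> real t powr a" using cq by simp
    from divide_right_mono[OF this, of "real t"] tp show ?thesis by simp
  qed
  also have "\<dots> = real t powr (a - 1)" using tp by (simp add: powr_diff)
  finally have QE: "?QE \<le> real t powr (a - 1)" .
  have "(\<Sum>h\<in>?W - E. wt alg H p h) \<le> (\<Sum>h\<in>?W - E. wt alg H p h * (2 * (real t - ?N h) / real t))"
  proof (intro sum_mono)
    fix h assume "h \<in> ?W - E"
    then have "2 * ?N h < real t" unfolding E_def by auto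
    then have "1 \<le> 2 * (real t - ?N h) / real t" using tp by (simp add: field_simps)
    then show "wt alg H p h \<le> wt alg H p h * (2 * (real t - ?N h) / real t)"
      using wt_nonneg[of alg H p h] by (metis mult.right_neutral mult_left_mono)
  qed
  also have "\<dots> \<le> (\<Sum>h\<in>?W. wt alg H p h * (2 * (real t - ?N h) / real t))"
    using E fW Nle by (intro sum_mono2) (auto intro!: divide_nonneg_nonneg mult_nonneg_nonneg wt_nonneg)
  also have "\<dots> = 2 / real t * (real t * (\<Sum>h\<in>?W. wt alg H p h) - (\<Sum>h\<in>?W. wt alg H p h * ?N h))"
  proof -
    have "(\<Sum>h\<in>?W. wt alg H p h * (2 * (real t - ?N h) / real t))
       = (\<Sum>h\<in>?W. 2 / real t * (real t * wt alg H p h - wt alg H p h * ?N h))"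
      by (intro sum.cong refl) (simp add: field_simps)
    also have "\<dots> = 2 / real t * (real t * (\<Sum>h\<in>?W. wt alg H p h) - (\<Sum>h\<in>?W. wt alg H p h * ?N h))"
      by (simp only: sum_distrib_left[symmetric] sum_subtractf)
    finally show ?thesis .
  qed
  also have "\<dots> = 2 / real t * (real t - cnt alg H p a1 t)"
    by (simp add: sum_wt cnt_sum)
  also have "\<dots> \<le> a * real t powr a / real t"
  proof -
    have "2 * (real t - cnt alg H p a1 t) \<le> a * real t powr a" using cp by simp
    from divide_right_mono[OF this, of "real t"] tp show ?thesis by simp
  qed
  also have "\<dots> \<le> a"
  proof -
    have "real t powr a \<le> real t powr 1" using t a by (intro powr_mono) auto
    then show ?thesis using tp a by (simp add: field_simps)
  qed
  finally have PEc: "(\<Sum>h\<in>?W - E. wt alg H p h) \<le> a" .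
  have "(\<Sum>h\<in>?W - E. wt alg H p h) + ?PE = 1"
    using sum.subset_diff[OF E fW, of "wt alg H p"] sum_wt[of alg H p t] by simp
  then have PE: "?PE \<ge> 1 - a" using PEc by simp
  then have PEp: "?PE > 0" using a by simp
  have QEp: "?QE > 0" using mb(2)[OF PEp] .
  have "ln ?QE \<le> ln (real t powr (a - 1))" using QE QEp tp by (subst ln_le_cancel_iff) auto
  also have "\<dots> = (a - 1) * ln (real t)" using tp by (simp add: ln_powr)
  finally have lnQ: "- ln ?QE \<ge> (1 - a) * ln (real t)" by (simp add: algebra_simps)
  have lt: "ln (real t) \<ge> 0" using t by simp
  have "(1-a)^2 * ln (real t) = (1-a) * ((1 - a) * ln (real t))" by (simp add: power2_eq_square)
  also have "\<dots> \<le> ?PE * ((1 - a) * ln (real t))"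
    using PE a lt by (intro mult_right_mono) auto
  also have "\<dots> \<le> ?PE * (- ln ?QE)" using lnQ PEp by (intro mult_left_mono) auto
  finally have key: "(1-a)^2 * ln (real t) - 2 \<le> (\<Sum>i\<in>UNIV. klr H p q i * cnt alg H p i t)"
    using mb(1) by simp
  have "(\<Sum>i\<in>UNIV. ereal (cnt alg H p i t) * KL (signal_dist H i p) (signal_dist H i q))
     = (\<Sum>i\<in>UNIV. ereal (klr H p q i * cnt alg H p i t))"
  proof (intro sum.cong refl)
    fix i :: 'a
    show "ereal (cnt alg H p i t) * KL (signal_dist H i p) (signal_dist H i q) = ereal (klr H p q i * cnt alg H p i t)"
    proof (cases "cnt alg H p i t > 0")
      case True
      then have "\<not> (\<exists>k. pmf (signal_dist H i p) k > 0 \<and> pmf (signal_dist H i q) k = 0)" using False by blast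
      then show ?thesis unfolding KL_def klr_def by (simp add: mult.commute)
    next
      case False
      then have "cnt alg H p i t = 0" using cnt_nonneg[of alg H p i t] by simp
      then show ?thesis by (simp add: zero_ereal_def[symmetric])
    qed
  qed
  also have "\<dots> = ereal (\<Sum>i\<in>UNIV. klr H p q i * cnt alg H p i t)" by simp
  finally show ?thesis using key by simp
qed



lemma sum_ereal_not_minf:
  fixes g :: "'x \<Rightarrow> ereal"
  assumes "finite A" "\<And>i. i \<in> A \<Longrightarrow> g i \<noteq> -\<infinity>"
  shows "sum g A \<noteq> -\<infinity>"
  using assms by (induction A rule: finite_induct) (auto simp: ereal_plus_eq_MInfty)

theorem lemma1:
  fixes L :: "'a::finite \<Rightarrow> 'm::finite \<Rightarrow> real"
    and H :: "'a \<Rightarrow> 'm \<Rightarrow> 's::finite"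
    and pstar :: "'m pmf"
    and a1 :: 'a
    and alg :: "('a, 's) algorithm"
  assumes "globally_observable L H"
    and "\<forall>i. i \<noteq> a1 \<longrightarrow> exp_loss L a1 pstar < exp_loss L i pstar"
    and "strongly_consistent L H alg"
  shows "\<forall>q. q \<notin> cell L a1 \<longrightarrow>
           (\<exists>f :: nat \<Rightarrow> real. f \<in> o(\<lambda>T. ln (real T)) \<and>
              (\<forall>\<^sub>F T in sequentially.
                 ereal (ln (real T) - f T)
                   \<le> (\<Sum>i\<in>UNIV. ereal (exp_count alg H pstar i T)
                                  * KL (signal_dist H i pstar) (signal_dist H i q))))"
proof (intro allI impI)
  fix q assume q: "q \<notin> cell L a1"
  define S where "S T = (\<Sum>i\<in>UNIV. ereal (exp_count alg H pstar i T)
                                  * KL (signal_dist H i pstar) (signal_dist H i q))" for T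
  have mn: "(MIN k. exp_loss L k pstar) = exp_loss L a1 pstar"
  proof -
    have le: "exp_loss L a1 pstar \<le> exp_loss L i pstar" for i
      using assms(2) by (cases "i = a1") (auto intro: less_imp_le)
    show ?thesis by (intro antisym MIN_le) (auto intro!: Min.boundedI le)
  qed
  define D where "D = (\<lambda>i. exp_loss L i pstar - exp_loss L a1 pstar) ` {i. i \<noteq> a1} \<union> {1}"
  define \<delta> where "\<delta> = Min D"
  have fD: "finite D" "D \<noteq> {}" unfolding D_def by auto
  have dpos: "\<delta> > 0" unfolding \<delta>_def using fD assms(2) by (subst Min_gr_iff) (auto simp: D_def)
  have gap: "\<forall>i. i \<noteq> a1 \<longrightarrow> exp_loss L i pstar - exp_loss L a1 pstar \<ge> \<delta>"
    unfolding \<delta>_def using fD by (auto intro!: Min_le simp: D_def)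
  have "\<not> (\<forall>j. j \<noteq> a1 \<longrightarrow> exp_loss L a1 q - exp_loss L j q \<le> 0)"
    using q by (simp add: cell_def)
  then obtain j where j: "j \<noteq> a1" "exp_loss L a1 q - exp_loss L j q > 0"
    by (auto simp: not_le)
  define Dq where "Dq = exp_loss L a1 q - (MIN k. exp_loss L k q)"
  have Dq: "Dq > 0" unfolding Dq_def using j MIN_le[of "\<lambda>k. exp_loss L k q" j] by linarith
  have Snm: "S T \<noteq> -\<infinity>" for T
    unfolding S_def
    by (intro sum_ereal_not_minf term_not_minf) (auto simp: exp_count_cnt cnt_nonneg)
  have K: "\<forall>\<^sub>F T in sequentially. S T \<ge> ereal ((1-a)^2 * ln (real T) - 3)" if a: "0 < a" "a < 1" for a
  proof -
    have "(\<lambda>T. exp_regret L alg H pstar T) \<in> o(\<lambda>T. real T powr a)"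
      using assms(3) a unfolding strongly_consistent_def by blast
    from landau_o.smallD[OF this, of "a * \<delta> / 2"] have ev1:
      "\<forall>\<^sub>F T in sequentially. norm (exp_regret L alg H pstar T) \<le> a * \<delta> / 2 * norm (real T powr a)"
      using a dpos by simp
    have "(\<lambda>T. exp_regret L alg H q T) \<in> o(\<lambda>T. real T powr a)"
      using assms(3) a unfolding strongly_consistent_def by blast
    from landau_o.smallD[OF this, of "Dq / 2"] have ev2:
      "\<forall>\<^sub>F T in sequentially. norm (exp_regret L alg H q T) \<le> Dq / 2 * norm (real T powr a)"
      using Dq by simp
    obtain N0 where N0: "\<And>t. t \<ge> N0 \<Longrightarrow> norm (exp_regret L alg H pstar t) \<le> a * \<delta> / 2 * norm (real t powr a)
        \<and> norm (exp_regret L alg H q t) \<le> Dq / 2 * norm (real t powr a)"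
      using eventually_conj[OF ev1 ev2] unfolding eventually_sequentially by blast
    show ?thesis unfolding eventually_sequentially
    proof (intro exI allI impI)
      fix T assume T: "T \<ge> N0 + 2"
      define t where "t = T - 1"
      have t1: "t \<ge> 1" "t \<ge> N0" "T = Suc t" using T unfolding t_def by auto
      have tp: "real t > 0" using t1 by simp
      have nrm: "norm (real t powr a) = real t powr a" by simp
      have r1: "exp_regret L alg H pstar t \<le> a * \<delta> / 2 * real t powr a"
        using N0[OF t1(2)] nrm by (metis abs_le_D1 real_norm_def)
      have r2: "exp_regret L alg H q t \<le> Dq / 2 * real t powr a"
        using N0[OF t1(2)] nrm by (metis abs_le_D1 real_norm_def)
      have "\<delta> * (real t - cnt alg H pstar a1 t) \<le> \<delta> * (a / 2 * real t powr a)"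
        using reg_lower_p[OF gap dpos mn, where alg=alg and H=H and t=t] r1 by (simp add: algebra_simps)
      then have cp: "real t - cnt alg H pstar a1 t \<le> a / 2 * real t powr a"
        using dpos by simp
      have "Dq * cnt alg H q a1 t \<le> Dq * (1/2 * real t powr a)"
      proof -
        have "Dq * cnt alg H q a1 t \<le> exp_regret L alg H q t"
          using reg_lower_q[where L=L and q=q and alg=alg and H=H and t=t] unfolding Dq_def by blast
        then show ?thesis using r2 by simp
      qed
      then have cq: "cnt alg H q a1 t \<le> 1/2 * real t powr a" using Dq by simp
      have sb: "(\<Sum>i\<in>UNIV. ereal (cnt alg H pstar i t) * KL (signal_dist H i pstar) (signal_dist H i q))
           \<ge> ereal ((1-a)^2 * ln (real t) - 2)"
        by (rule step_bound[OF a t1(1) cp cq])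
      have ST: "S T = (\<Sum>i\<in>UNIV. ereal (cnt alg H pstar i t) * KL (signal_dist H i pstar) (signal_dist H i q))"
        unfolding S_def exp_count_cnt t_def ..
      have "ln (real T) \<le> ln (2 * real t)" using t1 tp by (subst ln_le_cancel_iff) auto
      also have "\<dots> = ln 2 + ln (real t)" using tp by (simp add: ln_mult)
      also have "\<dots> \<le> 1 + ln (real t)" using ln_2_less_1 by simp
      finally have lT: "ln (real T) \<le> 1 + ln (real t)" .
      have a2: "(1-a)^2 \<le> 1" "(1-a)^2 \<ge> 0" using a by (auto simp: power_le_one)
      have "(1-a)^2 * ln (real T) \<le> (1-a)^2 * (1 + ln (real t))"
        using lT a2 by (intro mult_left_mono) auto
      then have "(1-a)^2 * ln (real T) - 3 \<le> (1-a)^2 * ln (real t) - 2"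
        using a2 by (simp add: algebra_simps)
      then show "S T \<ge> ereal ((1-a)^2 * ln (real T) - 3)" using sb ST
        by (metis ereal_less_eq(3) order_trans)
    qed
  qed
  define f where "f T = ln (real T) - real_of_ereal (min (S T) (ereal (ln (real T))))" for T
  have m_fin: "ereal (real_of_ereal (min (S T) (ereal (ln (real T))))) = min (S T) (ereal (ln (real T)))" for T
    using Snm[of T] by (intro ereal_real') (auto simp: min_def)
  have bound: "ereal (ln (real T) - f T) \<le> S T" for T
    unfolding f_def using m_fin[of T] by simp
  have fo: "f \<in> o(\<lambda>T. ln (real T))"
  proof (rule landau_o.smallI)
    fix c :: real assume c: "c > 0"
    define a where "a = min (1/2) (c/4)"
    have a: "0 < a" "a < 1" using c unfolding a_def by auto
    have ev3: "\<forall>\<^sub>F T in sequentially. real T \<ge> exp (6 / c)"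
      by (rule eventually_sequentiallyI[of "nat \<lceil>exp (6/c)\<rceil>"]) linarith
    show "\<forall>\<^sub>F T in sequentially. norm (f T) \<le> c * norm (ln (real T))"
      using eventually_conj[OF K[OF a] ev3]
    proof (rule eventually_mono)
      fix T assume A: "S T \<ge> ereal ((1-a)^2 * ln (real T) - 3) \<and> real T \<ge> exp (6 / c)"
      have Tp: "real T > 0" using A by (meson exp_gt_zero less_le_trans)
      have lT: "ln (real T) \<ge> 6 / c" using A Tp by (metis exp_gt_zero ln_exp ln_le_cancel_iff)
      have lT0: "ln (real T) \<ge> 0" using lT c by (smt (verit) divide_pos_pos)
      let ?x = "(1-a)^2 * ln (real T) - 3"
      have a2: "(1-a)^2 \<le> 1" "(1-a)^2 \<ge> 1 - 2*a" using a by (auto simp: power2_eq_square power_le_one algebra_simps)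
      have "?x \<le> ln (real T)" using a2 lT0 by (smt (verit) mult_left_le_one_le zero_le_power2)
      then have "ereal ?x \<le> min (S T) (ereal (ln (real T)))" using A by simp
      then have lo: "?x \<le> real_of_ereal (min (S T) (ereal (ln (real T))))"
        using m_fin[of T] by (metis ereal_less_eq(3))
      have hi: "real_of_ereal (min (S T) (ereal (ln (real T)))) \<le> ln (real T)"
        using m_fin[of T] by (metis ereal_less_eq(3) min.cobounded2)
      have f0: "f T \<ge> 0" using hi unfolding f_def by simp
      have "f T \<le> ln (real T) - ?x" using lo unfolding f_def by simp
      also have "\<dots> \<le> 2 * a * ln (real T) + 3"
      proof -
        have "(1 - 2*a) * ln (real T) \<le> (1-a)^2 * ln (real T)" using a2 lT0 by (intro mult_right_mono) auto
        then show ?thesis by (simp add: algebra_simps)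
      qed
      also have "\<dots> \<le> c / 2 * ln (real T) + 3" using lT0 a c unfolding a_def
        by (intro add_right_mono mult_right_mono) auto
      also have "\<dots> \<le> c * ln (real T)"
      proof -
        have "3 \<le> c / 2 * ln (real T)" using lT c by (simp add: field_simps)
        then show ?thesis by simp
      qed
      finally show "norm (f T) \<le> c * norm (ln (real T))" using f0 lT0 by simp
    qed
  qed
  show "\<exists>f :: nat \<Rightarrow> real. f \<in> o(\<lambda>T. ln (real T)) \<and>
              (\<forall>\<^sub>F T in sequentially.
                 ereal (ln (real T) - f T)
                   \<le> (\<Sum>i\<in>UNIV. ereal (exp_count alg H pstar i T)
                                  * KL (signal_dist H i pstar) (signal_dist H i q)))"
  proof (intro exI[of _ f] conjI)
    show "\<forall>\<^sub>F T in sequentially. ereal (ln (real T) - f T) \<le> (\<Sum>i\<in>UNIV. ereal (exp_count alg H pstar i T)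
                                  * KL (signal_dist H i pstar) (signal_dist H i q))"
      using bound unfolding S_def by simp
  qed (rule fo)
qed

end
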